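(* Let $f:\mathbb{R}^n\to\mathbb{R}$ be a convex, continuously differentiable function whose gradient is locally $\nu$-Hölder for some $\nu\in(0,1]$, and assume $\mathcal{X}^*:=\arg\min_{x\in\mathbb{R}^n} f(x)\neq\emptyset$ with optimal value $f^*$. Let $x^0\in\mathbb{R}^n$ be such that the level set $\Lambda(x^0):=\{x\in\mathbb{R}^n: f(x)\le f(x^0)\}$ is bounded. Let $r:=\max\{\|x\|: x\in\Lambda(x^0)\}$, $\bar r:=(1+2(1+\nu)^{1/\nu})r$, $\Omega:=\overline{B}(0;\bar r)$, and let $L_\Omega>0$ be a constant with $\|\nabla f(x)-\nabla f(y)\|\le L_\Omega\|x-y\|^\nu$ for all $x,y\in\Omega$. Let $(x^k)_{k\ge0}$ be generated by $$x^{k+1}=x^k-\alpha_k\|\nabla f(x^k)\|^{\frac{1-\nu}{\nu}}\nabla f(x^k),\qquad \alpha_k\in\Big(0,\big(\tfrac{1+\nu}{L_\Omega}\big)^{1/\nu}\Big].$$ Then: (a) $x^k\in\Lambda(x^0)$ for all $k$, and for all $k\in\mathbb{N}_0$, $$f(x^{k+1})\le f(x^k)-\Big(\alpha_k-\tfrac{L_\Omega}{1+\nu}\alpha_k^{1+\nu}\Big)\|\nabla f(x^k)\|^{\frac{1+\nu}{\nu}},$$ and $f(x^{k+1})\le f(x^k)$ for all $k\in\mathbb{N}_0$; (b) if moreover $\alpha_k\in\big(0,\tfrac{4\nu}{(1+\nu)L_\Omega^{1/\nu}}\big]$ for all $k$, then for every $x^*\in\mathcal{X}^*$ and all $k\in\mathbb{N}_0$,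 $$\|x^{k+1}-x^*\|^2\le\|x^k-x^*\|^2-\Big(\tfrac{4\nu\alpha_k}{(1+\nu)L_\Omega^{1/\nu}}-\alpha_k^2\Big)\|\nabla f(x^k)\|^{\frac{2}{\nu}},$$ and $\|x^{k+1}-x^*\|\le\|x^k-x^*\|$ for all $k\in\mathbb{N}_0$; (c) the coefficient $\alpha\mapsto \alpha-\tfrac{L_\Omega}{1+\nu}\alpha^{1+\nu}$ in (a) is maximized over $\big(0,(\tfrac{1+\nu}{L_\Omega})^{1/\nu}\big]$ at $\alpha=1/L_\Omega^{1/\nu}$, and the coefficient $\alpha\mapsto\tfrac{4\nu\alpha}{(1+\nu)L_\Omega^{1/\nu}}-\alpha^2$ in (b) is maximized over $\big(0,\tfrac{4\nu}{(1+\nu)L_\Omega^{1/\nu}}\big]$ at $\alpha=\tfrac{2\nu}{(1+\nu)L_\Omega^{1/\nu}}$.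
   Context: A map $F$ is locally $\nu$-Hölder if every point has a neighbourhood $B(\bar x;\delta)$ and a constant $L>0$ with $\|F(x)-F(y)\|\le L\|x-y\|^\nu$ on it. $\overline{B}(0;\rho)$ denotes the closed Euclidean ball of radius $\rho$ centred at $0$; $\mathbb{N}_0=\{0,1,2,\dots\}$. Since $\nabla f$ is locally $\nu$-Hölder and $\Omega$ is compact, such a constant $L_\Omega$ exists. *)

theory Defs
  imports "HOL-Analysis.Analysis"
begin

definition locally_holder :: "real \<Rightarrow> ('a::real_normed_vector \<Rightarrow> 'b::real_normed_vector) \<Rightarrow> bool" where
  "locally_holder \<nu> F \<longleftrightarrow>
     (\<forall>xb. \<exists>\<delta>>0. \<exists>L>0. \<forall>x\<in>ball xb \<delta>. \<forall>y\<in>ball xb \<delta>.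
        norm (F x - F y) \<le> L * norm (x - y) powr \<nu>)"

definition level_set :: "('a \<Rightarrow> real) \<Rightarrow> 'a \<Rightarrow> 'a set" where
  "level_set f x0 = {x. f x \<le> f x0}"

definition argmin_set :: "('a \<Rightarrow> real) \<Rightarrow> 'a set" where
  "argmin_set f = {x. \<forall>y. f x \<le> f y}"

end

theory Submission
  imports Defs
begin

lemma descent:
  fixes f :: "'a::real_inner \<Rightarrow> real"
  assumes der: "\<And>y. (f has_derivative (\<lambda>h. inner h (g y))) (at y)"
    and S: "convex S" "y \<in> S" "z \<in> S"
    and H: "\<And>u v. u \<in> S \<Longrightarrow> v \<in> S \<Longrightarrow> norm (g u - g v) \<le> L * norm (u - v) powr \<nu>"
    and nu: "0 < \<nu>" and L: "0 \<le> L"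
  shows "f z \<le> f y + inner (g y) (z - y) + L / (1 + \<nu>) * norm (z - y) powr (1 + \<nu>)"
proof -
  define d where "d = z - y"
  define k where "k t = f (y + t *\<^sub>R d) - t * inner (g y) d - L/(1+\<nu>) * t powr (1+\<nu>) * norm d powr (1+\<nu>)" for t
  define kd where "kd t = inner d (g (y + t *\<^sub>R d)) - inner (g y) d - L * t powr \<nu> * norm d powr (1+\<nu>)" for t
  have hder: "((\<lambda>t. f (y + t *\<^sub>R d)) has_real_derivative inner d (g (y + t *\<^sub>R d))) (at t)" for t
  proof -
    have "((\<lambda>t. f (y + t *\<^sub>R d)) has_derivative (\<lambda>s. inner (s *\<^sub>R d) (g (y + t *\<^sub>R d)))) (at t)"
      by (rule has_derivative_compose[of "\<lambda>t. y + t *\<^sub>R d" _ _ _ f]) (auto intro!: derivative_eq_intros der)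
    moreover have "(\<lambda>s. inner (s *\<^sub>R d) (g (y + t *\<^sub>R d))) = (*) (inner d (g (y + t *\<^sub>R d)))"
      by (auto simp: inner_commute)
    ultimately show ?thesis by (simp add: has_field_derivative_def)
  qed
  have kder: "(k has_real_derivative kd t) (at t)" if "0 < t" for t
    unfolding k_def kd_def
    using that nu
    apply (auto intro!: derivative_eq_intros hder)
    done
  have hcont: "continuous_on {0..1} (\<lambda>t. f (y + t *\<^sub>R d))"
    using hder by (meson DERIV_continuous continuous_at_imp_continuous_on)
  have pcont: "continuous_on {0..1} (\<lambda>t::real. t powr (1+\<nu>))"
    using nu by (intro continuous_on_powr') (auto intro!: continuous_intros)
  have kcont: "continuous_on {0..1} k"
    unfolding k_def by (intro continuous_intros hcont pcont)
  obtain l c where c: "0 < c" "c < 1" "(k has_real_derivative l) (at c)" "k 1 - k 0 = (1 - 0) * l"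
    using MVT[of 0 1 k] kcont kder by (auto simp: real_differentiable_def)
  have l: "l = kd c" using DERIV_unique[OF c(3) kder[OF c(1)]] .
  have yc: "y + c *\<^sub>R d \<in> S"
  proof -
    have "y + c *\<^sub>R d = (1 - c) *\<^sub>R y + c *\<^sub>R z" by (simp add: d_def algebra_simps)
    then show ?thesis using S c by (simp add: convex_def)
  qed
  have "inner d (g (y + c *\<^sub>R d)) - inner (g y) d = inner d (g (y + c *\<^sub>R d) - g y)"
    by (simp add: inner_diff_right inner_commute)
  also have "\<dots> \<le> norm d * norm (g (y + c *\<^sub>R d) - g y)"
    by (rule order_trans[OF _ Cauchy_Schwarz_ineq2]) simp
  also have "\<dots> \<le> norm d * (L * norm (c *\<^sub>R d) powr \<nu>)"
    using H[OF yc S(2)] by (intro mult_left_mono) auto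
  also have "\<dots> = L * c powr \<nu> * norm d powr (1 + \<nu>)"
    using c by (simp add: powr_add powr_mult abs_of_pos)
  finally have "kd c \<le> 0" unfolding kd_def by simp
  then have "k 1 \<le> k 0" using c l by simp
  then show ?thesis using nu by (simp add: k_def d_def)
qed

lemma tangent:
  fixes f :: "'a::real_inner \<Rightarrow> real"
  assumes cf: "convex_on UNIV f" and d: "(f has_derivative (\<lambda>h. inner h G)) (at x)"
  shows "f x + inner G (y - x) \<le> f y"
proof -
  define h where "h t = f (x + t *\<^sub>R (y - x))" for t
  have hc: "convex_on UNIV h"
  proof (rule convex_onI)
    fix t a b :: real assume t: "0 < t" "t < 1"
    have "x + ((1 - t) *\<^sub>R a + t *\<^sub>R b) *\<^sub>R (y - x)
        = (1 - t) *\<^sub>R (x + a *\<^sub>R (y - x)) + t *\<^sub>R (x + b *\<^sub>R (y - x))"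
      by (simp add: algebra_simps)
    then show "h ((1 - t) *\<^sub>R a + t *\<^sub>R b) \<le> (1 - t) * h a + t * h b"
      unfolding h_def using convex_onD[OF cf, of t] t by simp
  qed simp
  have "(h has_derivative (\<lambda>s. inner (s *\<^sub>R (y - x)) G)) (at 0)"
    unfolding h_def
    by (rule has_derivative_compose[of "\<lambda>t. x + t *\<^sub>R (y - x)" _ _ _ f]) (auto intro!: derivative_eq_intros d)
  moreover have "(\<lambda>s. inner (s *\<^sub>R (y - x)) G) = (*) (inner G (y - x))"
    by (auto simp: inner_commute)
  ultimately have "(h has_field_derivative inner G (y - x)) (at 0 within UNIV)"
    by (simp add: has_field_derivative_def)
  from convex_on_imp_above_tangent[OF hc _ _ _ this, of 1]
  show ?thesis by (simp add: h_def)
qed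

theorem theorem3p13:
  fixes f :: "real ^ 'n \<Rightarrow> real"
    and g :: "real ^ 'n \<Rightarrow> real ^ 'n"
    and \<nu> L r :: real
    and x0 :: "real ^ 'n"
    and x :: "nat \<Rightarrow> real ^ 'n"
    and \<alpha> :: "nat \<Rightarrow> real"
  assumes convex: "convex_on UNIV f"
    and grad: "\<And>y. GDERIV f y :> g y"
    and grad_cont: "continuous_on UNIV g"
    and nu: "0 < \<nu>" "\<nu> \<le> 1"
    and holder: "locally_holder \<nu> g"
    and argmin_ne: "argmin_set f \<noteq> {}"
    and bounded_level: "bounded (level_set f x0)"
    and r_def: "r = (SUP y\<in>level_set f x0. norm y)"
    and L_pos: "L > 0"
    and L_holder: "\<And>y z. y \<in> cball 0 ((1 + 2 * (1 + \<nu>) powr (1 / \<nu>)) * r) \<Longrightarrow>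
                          z \<in> cball 0 ((1 + 2 * (1 + \<nu>) powr (1 / \<nu>)) * r) \<Longrightarrow>
                          norm (g y - g z) \<le> L * norm (y - z) powr \<nu>"
    and x_0: "x 0 = x0"
    and x_step: "\<And>k. x (Suc k) = x k - (\<alpha> k * norm (g (x k)) powr ((1 - \<nu>) / \<nu>)) *\<^sub>R g (x k)"
    and alpha: "\<And>k. 0 < \<alpha> k \<and> \<alpha> k \<le> ((1 + \<nu>) / L) powr (1 / \<nu>)"
  shows "(\<forall>k. x k \<in> level_set f x0)
       \<and> (\<forall>k. f (x (Suc k)) \<le> f (x k)
                 - (\<alpha> k - L / (1 + \<nu>) * \<alpha> k powr (1 + \<nu>)) * norm (g (x k)) powr ((1 + \<nu>) / \<nu>))
       \<and> (\<forall>k. f (x (Suc k)) \<le> f (x k))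
       \<and> ((\<forall>k. \<alpha> k \<le> 4 * \<nu> / ((1 + \<nu>) * L powr (1 / \<nu>))) \<longrightarrow>
            (\<forall>xs\<in>argmin_set f.
               (\<forall>k. (norm (x (Suc k) - xs))\<^sup>2 \<le> (norm (x k - xs))\<^sup>2
                     - (4 * \<nu> * \<alpha> k / ((1 + \<nu>) * L powr (1 / \<nu>)) - (\<alpha> k)\<^sup>2)
                       * norm (g (x k)) powr (2 / \<nu>))
             \<and> (\<forall>k. norm (x (Suc k) - xs) \<le> norm (x k - xs))))
       \<and> is_arg_max (\<lambda>a. a - L / (1 + \<nu>) * a powr (1 + \<nu>))
            (\<lambda>a. a \<in> {0<..((1 + \<nu>) / L) powr (1 / \<nu>)}) (1 / L powr (1 / \<nu>))
       \<and> is_arg_max (\<lambda>a. 4 * \<nu> * a / ((1 + \<nu>) * L powr (1 / \<nu>)) - a\<^sup>2)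
            (\<lambda>a. a \<in> {0<..4 * \<nu> / ((1 + \<nu>) * L powr (1 / \<nu>))})
            (2 * \<nu> / ((1 + \<nu>) * L powr (1 / \<nu>)))"
proof -
  have der: "\<And>y. (f has_derivative (\<lambda>h. inner h (g y))) (at y)"
    using grad by (simp add: gderiv_def)
  define R where "R = (1 + 2 * (1 + \<nu>) powr (1 / \<nu>)) * r"
  define Lq where "Lq = L powr (1 / \<nu>)"
  have Lq_pos: "Lq > 0" using L_pos by (simp add: Lq_def)
  have Lqp: "Lq powr (1 + \<nu>) = L * Lq"
  proof -
    have "Lq powr (1 + \<nu>) = L powr (1 / \<nu> * (1 + \<nu>))" by (simp add: Lq_def powr_powr)
    also have "1 / \<nu> * (1 + \<nu>) = 1 / \<nu> + 1" using nu by (simp add: field_simps)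
    also have "L powr (1 / \<nu> + 1) = L * Lq" using L_pos by (simp add: powr_add Lq_def)
    finally show ?thesis .
  qed
  have ident: "L / (1 + \<nu>) * b powr (1 + \<nu>) = (b * Lq) powr (1 + \<nu>) / ((1 + \<nu>) * Lq)" for b
  proof -
    have "(b * Lq) powr (1 + \<nu>) / ((1 + \<nu>) * Lq) = (b powr (1 + \<nu>) * L) * Lq / ((1 + \<nu>) * Lq)"
      by (simp add: powr_mult Lqp mult.assoc)
    also have "\<dots> = L / (1 + \<nu>) * b powr (1 + \<nu>)"
      using Lq_pos nu by simp
    finally show ?thesis by simp
  qed
  have hne0: "(1 + \<nu>) * Lq \<noteq> 0" "Lq + Lq * \<nu> \<noteq> 0" "1 + \<nu> \<noteq> 0" "Lq \<noteq> 0"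
  proof -
    have "Lq + Lq * \<nu> > 0" using nu Lq_pos by (simp add: add_pos_pos)
    then show "(1 + \<nu>) * Lq \<noteq> 0" "Lq + Lq * \<nu> \<noteq> 0" "1 + \<nu> \<noteq> 0" "Lq \<noteq> 0"
      using nu Lq_pos by auto
  qed
  have LS_ne: "x0 \<in> level_set f x0" by (simp add: level_set_def)
  have bdd: "bdd_above (norm ` level_set f x0)"
    using bounded_level by (simp add: bdd_above_norm)
  have normr: "norm y \<le> r" if "y \<in> level_set f x0" for y
    unfolding r_def by (rule cSUP_upper[OF that bdd])
  have r0: "0 \<le> r" using normr[OF LS_ne] norm_ge_zero[of x0] by linarith
  have pw1: "1 \<le> (1 + \<nu>) powr (1 / \<nu>)"
    using nu by (intro ge_one_powr_ge_zero) auto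
  have R3: "3 * r \<le> R"
    using mult_right_mono[of 3 "1 + 2 * (1 + \<nu>) powr (1 / \<nu>)" r] pw1 r0 unfolding R_def by simp
  have Rr: "r \<le> R" using R3 r0 by linarith
  have HO: "norm (g u - g v) \<le> L * norm (u - v) powr \<nu>"
    if "u \<in> cball 0 R" "v \<in> cball 0 R" for u v
    using L_holder that unfolding R_def by blast
  have desc: "f z \<le> f y + inner (g y) (z - y) + L / (1 + \<nu>) * norm (z - y) powr (1 + \<nu>)"
    if "y \<in> cball 0 R" "z \<in> cball 0 R" for y z
    by (rule descent[OF der convex_cball that HO]) (use nu L_pos in auto)
  have amin: "g xs = 0 \<and> xs \<in> level_set f x0 \<and> (\<forall>y. f xs \<le> f y)" if "xs \<in> argmin_set f" for xs
  proof -
    have ev: "eventually (\<lambda>y. f xs \<le> f y) (at xs)"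
      using that by (simp add: argmin_set_def)
    have "(\<lambda>h. inner h (g xs)) = (\<lambda>h. 0)"
      by (rule has_derivative_local_min[OF der ev])
    then have "inner (g xs) (g xs) = 0" by metis
    then show ?thesis using that by (simp add: argmin_set_def level_set_def)
  qed
  obtain xs0 where xs0: "xs0 \<in> argmin_set f" using argmin_ne by blast
  have gbound: "norm (g y) \<le> L * (2 * r) powr \<nu>" if "y \<in> level_set f x0" for y
  proof -
    have a: "g xs0 = 0" "norm xs0 \<le> r" using amin[OF xs0] normr by auto
    have b: "norm y \<le> r" using normr[OF that] .
    have "norm (g y) = norm (g y - g xs0)" using a by simp
    also have "\<dots> \<le> L * norm (y - xs0) powr \<nu>"
      using a b Rr by (intro HO) auto
    also have "\<dots> \<le> L * (2 * r) powr \<nu>"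
      using a b nu L_pos norm_triangle_ineq4[of y xs0]
      by (intro mult_left_mono powr_mono2) auto
    finally show ?thesis .
  qed
  have gpow: "norm (g y) powr (1 / \<nu>) \<le> Lq * (2 * r)" if "y \<in> level_set f x0" for y
  proof -
    have "norm (g y) powr (1 / \<nu>) \<le> (L * (2 * r) powr \<nu>) powr (1 / \<nu>)"
      using gbound[OF that] nu by (intro powr_mono2) auto
    also have "\<dots> = Lq * (2 * r)"
      using nu r0 by (simp add: powr_mult powr_powr Lq_def)
    finally show ?thesis .
  qed
  have stepA: "f (x (Suc k)) \<le> f (x k) - (\<alpha> k - L / (1 + \<nu>) * \<alpha> k powr (1 + \<nu>)) * norm (g (x k)) powr ((1 + \<nu>) / \<nu>)
      \<and> 0 \<le> \<alpha> k - L / (1 + \<nu>) * \<alpha> k powr (1 + \<nu>)"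
    if xk: "x k \<in> level_set f x0" for k
  proof -
    define G where "G = g (x k)"
    define nG where "nG = norm G"
    define a where "a = \<alpha> k"
    have a: "0 < a" "a \<le> ((1 + \<nu>) / L) powr (1 / \<nu>)" using alpha[of k] by (auto simp: a_def)
    have apow: "a powr \<nu> \<le> (1 + \<nu>) / L"
    proof -
      have "a powr \<nu> \<le> (((1 + \<nu>) / L) powr (1 / \<nu>)) powr \<nu>"
        using a nu by (intro powr_mono2) auto
      also have "\<dots> = (1 + \<nu>) / L" using nu L_pos by (simp add: powr_powr)
      finally show ?thesis .
    qed
    have a1: "a powr (1 + \<nu>) = a * a powr \<nu>" using a by (simp add: powr_add)
    have "L / (1 + \<nu>) * a powr (1 + \<nu>) = a * (L / (1 + \<nu>) * a powr \<nu>)" using a1 by simp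
    also have "\<dots> \<le> a * (L / (1 + \<nu>) * ((1 + \<nu>) / L))"
      using apow a nu L_pos by (intro mult_left_mono) auto
    also have "\<dots> = a" using nu L_pos by simp
    finally have coef: "0 \<le> a - L / (1 + \<nu>) * a powr (1 + \<nu>)" by simp
    have "f (x (Suc k)) \<le> f (x k) - (a - L / (1 + \<nu>) * a powr (1 + \<nu>)) * nG powr ((1 + \<nu>) / \<nu>)"
    proof (cases "G = 0")
      case True
      then show ?thesis using x_step[of k] by (simp add: G_def nG_def)
    next
      case False
      then have nG: "nG > 0" by (simp add: nG_def)
      define s where "s = (a * nG powr ((1 - \<nu>) / \<nu>)) *\<^sub>R G"
      have xs: "x (Suc k) = x k - s" using x_step[of k] by (simp add: s_def a_def nG_def G_def)
      have e1: "(1 - \<nu>) / \<nu> + 1 = 1 / \<nu>" using nu by (simp add: field_simps)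
      have ns: "norm s = a * nG powr (1 / \<nu>)"
      proof -
        have "norm s = a * nG powr ((1 - \<nu>) / \<nu>) * nG powr 1"
          using a nG by (simp add: s_def nG_def)
        also have "\<dots> = a * nG powr (1 / \<nu>)"
          by (simp only: mult.assoc powr_add[symmetric] e1)
        finally show ?thesis .
      qed
      have ns_le: "norm s \<le> 2 * (1 + \<nu>) powr (1 / \<nu>) * r"
      proof -
        have "norm s \<le> ((1 + \<nu>) / L) powr (1 / \<nu>) * (Lq * (2 * r))"
          unfolding ns using a gpow[OF xk] by (intro mult_mono) (auto simp: nG_def G_def)
        also have "\<dots> = 2 * (1 + \<nu>) powr (1 / \<nu>) * r"
          using Lq_pos nu L_pos by (simp add: powr_divide Lq_def)
        finally show ?thesis .
      qed
      have in1: "x k \<in> cball 0 R" using normr[OF xk] Rr by simp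
      have in2: "x (Suc k) \<in> cball 0 R"
      proof -
        have "norm (x k - s) \<le> norm (x k) + norm s" by (rule norm_triangle_ineq4)
        also have "\<dots> \<le> R" using normr[OF xk] ns_le unfolding R_def by (simp add: algebra_simps)
        finally show ?thesis using xs by simp
      qed
      have d: "f (x (Suc k)) \<le> f (x k) + inner G (x (Suc k) - x k) + L / (1 + \<nu>) * norm (x (Suc k) - x k) powr (1 + \<nu>)"
        using desc[OF in1 in2] by (simp add: G_def)
      have e2: "(1 - \<nu>) / \<nu> + 2 = (1 + \<nu>) / \<nu>" using nu by (simp add: field_simps)
      have i1: "inner G (x (Suc k) - x k) = - a * nG powr ((1 + \<nu>) / \<nu>)"
      proof -
        have "inner G (x (Suc k) - x k) = - (a * nG powr ((1 - \<nu>) / \<nu>) * nG powr 2)"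
          using nG by (simp add: xs s_def nG_def power2_norm_eq_inner powr_realpow[where n=2, simplified])
        also have "\<dots> = - a * nG powr ((1 + \<nu>) / \<nu>)"
          by (simp only: mult.assoc powr_add[symmetric] e2 mult_minus_left)
        finally show ?thesis .
      qed
      have i2: "norm (x (Suc k) - x k) powr (1 + \<nu>) = a powr (1 + \<nu>) * nG powr ((1 + \<nu>) / \<nu>)"
        using nu by (simp add: xs ns powr_mult powr_powr)
      show ?thesis using d i1 i2 by (simp add: algebra_simps)
    qed
    then show ?thesis using coef by (simp add: a_def nG_def G_def)
  qed
  have mono1: "f (x (Suc k)) \<le> f (x k)" if "x k \<in> level_set f x0" for k
  proof -
    have "0 \<le> (\<alpha> k - L / (1 + \<nu>) * \<alpha> k powr (1 + \<nu>)) * norm (g (x k)) powr ((1 + \<nu>) / \<nu>)"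
      using stepA[OF that] by simp
    then show ?thesis using stepA[OF that] by linarith
  qed
  have inLS: "\<forall>k. x k \<in> level_set f x0"
  proof
    fix k show "x k \<in> level_set f x0"
    proof (induction k)
      case 0 then show ?case using LS_ne x_0 by simp
    next
      case (Suc k) then show ?case using mono1[OF Suc] by (simp add: level_set_def)
    qed
  qed
  have B: "(\<forall>xs\<in>argmin_set f.
               (\<forall>k. (norm (x (Suc k) - xs))\<^sup>2 \<le> (norm (x k - xs))\<^sup>2
                     - (4 * \<nu> * \<alpha> k / ((1 + \<nu>) * L powr (1 / \<nu>)) - (\<alpha> k)\<^sup>2)
                       * norm (g (x k)) powr (2 / \<nu>))
             \<and> (\<forall>k. norm (x (Suc k) - xs) \<le> norm (x k - xs)))"
    if ab: "\<forall>k. \<alpha> k \<le> 4 * \<nu> / ((1 + \<nu>) * L powr (1 / \<nu>))"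
  proof
    fix xs assume hxs: "xs \<in> argmin_set f"
    have gx: "g xs = 0" and xsL: "xs \<in> level_set f x0" and fmin: "\<And>y. f xs \<le> f y"
      using amin[OF hxs] by auto
    have nxs: "norm xs \<le> r" using normr[OF xsL] .
    have stepB: "(norm (x (Suc k) - xs))\<^sup>2 \<le> (norm (x k - xs))\<^sup>2
                     - (4 * \<nu> * \<alpha> k / ((1 + \<nu>) * Lq) - (\<alpha> k)\<^sup>2)
                       * norm (g (x k)) powr (2 / \<nu>)" for k
    proof -
      have xk: "x k \<in> level_set f x0" using inLS by simp
      define G where "G = g (x k)"
      define nG where "nG = norm G"
      define a where "a = \<alpha> k"
      have a: "0 < a" using alpha[of k] by (auto simp: a_def)
      show ?thesis
      proof (cases "G = 0")
        case True
        then show ?thesis using x_step[of k] by (simp add: G_def)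
      next
        case False
        then have nG: "nG > 0" by (simp add: nG_def)
        define t where "t = (nG / L) powr (1 / \<nu>)"
        have t_eq: "t = nG powr (1 / \<nu>) / Lq" by (simp add: t_def powr_divide Lq_def)
        have t0: "0 \<le> t" by (simp add: t_def)
        have t_le: "t \<le> 2 * r"
          using gpow[OF xk] Lq_pos unfolding t_eq by (simp add: pos_divide_le_eq nG_def G_def mult.commute)
        define u where "u = (t / nG) *\<^sub>R G"
        have nu_: "norm u = t" using nG t0 by (simp add: u_def nG_def)
        have iu: "inner G u = t * nG"
          using nG by (simp add: u_def nG_def power2_norm_eq_inner[symmetric] power2_eq_square)
        have nxk: "norm (x k) \<le> r" using normr[OF xk] .
        have in_xk: "x k \<in> cball 0 R" using nxk Rr by simp
        have in_xs: "xs \<in> cball 0 R" using nxs Rr by simp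
        have in_w1: "x k - u \<in> cball 0 R"
          using norm_triangle_ineq4[of "x k" u] nu_ nxk t_le R3 by simp
        have in_w2: "xs + u \<in> cball 0 R"
          using norm_triangle_ineq[of xs u] nu_ nxs t_le R3 by simp
        define Q where "Q = L / (1 + \<nu>) * t powr (1 + \<nu>)"
        have d1: "f (x k - u) \<le> f (x k) - t * nG + Q"
          using desc[OF in_xk in_w1] by (simp add: G_def[symmetric] iu nu_ Q_def)
        have d2: "f (xs + u) \<le> f xs + Q"
          using desc[OF in_xs in_w2] by (simp add: gx nu_ Q_def)
        have tg: "f (x k) + inner G (xs + u - x k) \<le> f (xs + u)"
          using tangent[OF convex der[of "x k"]] by (simp add: G_def)
        have ig: "inner G (xs + u - x k) = - inner G (x k - xs) + t * nG"
          by (simp add: inner_diff_right inner_add_right iu)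
        have m: "f xs \<le> f (x k - u)" by (rule fmin)
        have key: "2 * (t * nG - Q) \<le> inner G (x k - xs)"
          using d1 d2 tg ig m by (smt (verit))
        define P where "P = nG powr ((1 + \<nu>) / \<nu>)"
        have e3: "1 / \<nu> + 1 = (1 + \<nu>) / \<nu>" using nu by (simp add: field_simps)
        have tnG: "t * nG = P / Lq"
        proof -
          have "t * nG = nG powr (1 / \<nu>) * nG powr 1 / Lq" using nG by (simp add: t_eq)
          also have "\<dots> = P / Lq" by (simp only: powr_add[symmetric] e3 P_def)
          finally show ?thesis .
        qed
        have Qeq: "Q = P / ((1 + \<nu>) * Lq)"
        proof -
          have "t * Lq = nG powr (1 / \<nu>)" using Lq_pos by (simp add: t_eq)
          then have "(t * Lq) powr (1 + \<nu>) = P" using nu by (simp add: powr_powr P_def)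
          then show ?thesis unfolding Q_def ident by simp
        qed
        have coco: "2 * \<nu> / ((1 + \<nu>) * Lq) * P \<le> inner G (x k - xs)"
        proof -
          have "2 * \<nu> / ((1 + \<nu>) * Lq) * P = 2 * (t * nG - Q)"
          proof -
            have hne: "(1 + \<nu>) * Lq \<noteq> 0" "Lq \<noteq> 0" using nu Lq_pos by auto
            show ?thesis unfolding tnG Qeq using hne by (simp add: divide_simps) (simp add: algebra_simps)
          qed
          then show ?thesis using key by simp
        qed
        define \<beta> where "\<beta> = a * nG powr ((1 - \<nu>) / \<nu>)"
        have b0: "0 \<le> \<beta>" using a by (simp add: \<beta>_def)
        have xs1: "x (Suc k) - xs = (x k - xs) - \<beta> *\<^sub>R G"
          using x_step[of k] by (simp add: \<beta>_def a_def nG_def G_def)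
        have expand: "(norm ((x k - xs) - \<beta> *\<^sub>R G))\<^sup>2
            = (norm (x k - xs))\<^sup>2 - 2 * \<beta> * inner G (x k - xs) + \<beta>\<^sup>2 * nG\<^sup>2"
          unfolding nG_def power2_norm_eq_inner
          by (simp add: inner_diff_left inner_diff_right inner_commute algebra_simps power2_eq_square)
        have e4: "(1 - \<nu>) / \<nu> + (1 + \<nu>) / \<nu> = 2 / \<nu>" using nu by (simp add: field_simps)
        have bP: "\<beta> * P = a * nG powr (2 / \<nu>)"
          by (simp only: \<beta>_def P_def mult.assoc powr_add[symmetric] e4)
        have e1: "(1 - \<nu>) / \<nu> + 1 = 1 / \<nu>" using nu by (simp add: field_simps)
        have e5: "1 / \<nu> + 1 / \<nu> = 2 / \<nu>" by simp
        have bn: "\<beta>\<^sup>2 * nG\<^sup>2 = a\<^sup>2 * nG powr (2 / \<nu>)"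
        proof -
          have "\<beta> * nG = a * (nG powr ((1 - \<nu>) / \<nu>) * nG powr 1)"
            using nG by (simp add: \<beta>_def)
          also have "\<dots> = a * nG powr (1 / \<nu>)" by (simp only: powr_add[symmetric] e1)
          finally have "(\<beta> * nG)\<^sup>2 = a\<^sup>2 * (nG powr (1 / \<nu>) * nG powr (1 / \<nu>))"
            by (simp add: power2_eq_square)
          also have "\<dots> = a\<^sup>2 * nG powr (2 / \<nu>)" by (simp only: powr_add[symmetric] e5)
          finally show ?thesis by (simp add: power_mult_distrib)
        qed
        have h1: "2 * \<beta> * (2 * \<nu> / ((1 + \<nu>) * Lq) * P) \<le> 2 * \<beta> * inner G (x k - xs)"
          using coco b0 by (intro mult_left_mono) auto
        have "4 * \<nu> * a / ((1 + \<nu>) * Lq) * nG powr (2 / \<nu>) = 4 * \<nu> / ((1 + \<nu>) * Lq) * (a * nG powr (2 / \<nu>))"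
          by simp
        also have "\<dots> = 4 * \<nu> / ((1 + \<nu>) * Lq) * (\<beta> * P)" by (simp only: bP)
        also have "\<dots> = 2 * \<beta> * (2 * \<nu> / ((1 + \<nu>) * Lq) * P)" by (simp add: algebra_simps)
        also note h1
        finally have h3: "4 * \<nu> * a / ((1 + \<nu>) * Lq) * nG powr (2 / \<nu>) \<le> 2 * \<beta> * inner G (x k - xs)" .
        have fin: "(norm (x k - xs))\<^sup>2 - 2 * \<beta> * inner G (x k - xs) + a\<^sup>2 * nG powr (2 / \<nu>)
            \<le> (norm (x k - xs))\<^sup>2 - (4 * \<nu> * a / ((1 + \<nu>) * Lq) - a\<^sup>2) * nG powr (2 / \<nu>)"
          using h3 left_diff_distrib[of "4 * \<nu> * a / ((1 + \<nu>) * Lq)" "a\<^sup>2" "nG powr (2 / \<nu>)"] by linarith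
        have lhs: "(norm (x (Suc k) - xs))\<^sup>2 = (norm (x k - xs))\<^sup>2 - 2 * \<beta> * inner G (x k - xs) + a\<^sup>2 * nG powr (2 / \<nu>)"
          unfolding xs1 expand bn ..
        show ?thesis
          using fin unfolding lhs a_def nG_def G_def by linarith
      qed
    qed
    have monoB: "norm (x (Suc k) - xs) \<le> norm (x k - xs)" for k
    proof -
      have c: "\<alpha> k \<le> 4 * \<nu> / ((1 + \<nu>) * Lq)" using ab unfolding Lq_def by blast
      have "0 \<le> \<alpha> k * (4 * \<nu> / ((1 + \<nu>) * Lq) - \<alpha> k)"
        using alpha[of k] c by (intro mult_nonneg_nonneg) auto
      also have "\<alpha> k * (4 * \<nu> / ((1 + \<nu>) * Lq) - \<alpha> k) = 4 * \<nu> * \<alpha> k / ((1 + \<nu>) * Lq) - (\<alpha> k)\<^sup>2"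
        by (simp add: power2_eq_square right_diff_distrib)
      finally have c2: "0 \<le> 4 * \<nu> * \<alpha> k / ((1 + \<nu>) * Lq) - (\<alpha> k)\<^sup>2" .
      have "0 \<le> (4 * \<nu> * \<alpha> k / ((1 + \<nu>) * Lq) - (\<alpha> k)\<^sup>2) * norm (g (x k)) powr (2 / \<nu>)"
        using c2 by (intro mult_nonneg_nonneg) auto
      then have "(norm (x (Suc k) - xs))\<^sup>2 \<le> (norm (x k - xs))\<^sup>2"
        using stepB[of k] by linarith
      then show ?thesis by (rule power2_le_imp_le) simp
    qed
    show "(\<forall>k. (norm (x (Suc k) - xs))\<^sup>2 \<le> (norm (x k - xs))\<^sup>2
                     - (4 * \<nu> * \<alpha> k / ((1 + \<nu>) * L powr (1 / \<nu>)) - (\<alpha> k)\<^sup>2)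
                       * norm (g (x k)) powr (2 / \<nu>))
             \<and> (\<forall>k. norm (x (Suc k) - xs) \<le> norm (x k - xs))"
      using stepB monoB unfolding Lq_def by blast
  qed
  have C1: "is_arg_max (\<lambda>a. a - L / (1 + \<nu>) * a powr (1 + \<nu>))
            (\<lambda>a. a \<in> {0<..((1 + \<nu>) / L) powr (1 / \<nu>)}) (1 / L powr (1 / \<nu>))"
  proof -
    have a0: "0 < 1 / Lq" "1 / Lq \<le> ((1 + \<nu>) / L) powr (1 / \<nu>)"
      using Lq_pos pw1 L_pos by (auto simp: powr_divide Lq_def divide_right_mono)
    have val0: "1 / Lq - L / (1 + \<nu>) * (1 / Lq) powr (1 + \<nu>) = \<nu> / (1 + \<nu>) / Lq"
      unfolding ident using hne0 by (simp add: divide_simps)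
    have le: "a - L / (1 + \<nu>) * a powr (1 + \<nu>) \<le> \<nu> / (1 + \<nu>) / Lq" if "0 < a" for a
    proof -
      define s where "s = a * Lq"
      have s0: "0 \<le> s" using that Lq_pos by (simp add: s_def)
      have y: "s * 1 \<le> s powr (1 + \<nu>) / (1 + \<nu>) + 1 powr ((1 + \<nu>) / \<nu>) / ((1 + \<nu>) / \<nu>)"
        using nu s0 by (intro Youngs_inequality) (auto simp: field_simps)
      then have y': "s - s powr (1 + \<nu>) / (1 + \<nu>) \<le> \<nu> / (1 + \<nu>)" by simp
      have "a - L / (1 + \<nu>) * a powr (1 + \<nu>) = (s - s powr (1 + \<nu>) / (1 + \<nu>)) / Lq"
        unfolding ident using hne0 by (simp add: s_def divide_simps)
      also have "\<dots> \<le> \<nu> / (1 + \<nu>) / Lq" using y' Lq_pos by (intro divide_right_mono) auto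
      finally show ?thesis .
    qed
    have le': "y - L / (1 + \<nu>) * y powr (1 + \<nu>) \<le> 1 / Lq - L / (1 + \<nu>) * (1 / Lq) powr (1 + \<nu>)"
      if "y \<in> {0<..((1 + \<nu>) / L) powr (1 / \<nu>)}" for y
    proof -
      have "0 < y" using that by simp
      then show ?thesis using le[of y] val0 by linarith
    qed
    show ?thesis unfolding is_arg_max_def Lq_def[symmetric]
    proof (intro conjI notI)
      show "1 / Lq \<in> {0<..((1 + \<nu>) / L) powr (1 / \<nu>)}" using a0 by simp
    next
      assume "\<exists>y. y \<in> {0<..((1 + \<nu>) / L) powr (1 / \<nu>)} \<and>
        1 / Lq - L / (1 + \<nu>) * (1 / Lq) powr (1 + \<nu>) < y - L / (1 + \<nu>) * y powr (1 + \<nu>)"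
      then obtain y where "y \<in> {0<..((1 + \<nu>) / L) powr (1 / \<nu>)}"
        "1 / Lq - L / (1 + \<nu>) * (1 / Lq) powr (1 + \<nu>) < y - L / (1 + \<nu>) * y powr (1 + \<nu>)" by blast
      then show False using le'[of y] by linarith
    qed
  qed
  have C2: "is_arg_max (\<lambda>a. 4 * \<nu> * a / ((1 + \<nu>) * L powr (1 / \<nu>)) - a\<^sup>2)
            (\<lambda>a. a \<in> {0<..4 * \<nu> / ((1 + \<nu>) * L powr (1 / \<nu>))})
            (2 * \<nu> / ((1 + \<nu>) * L powr (1 / \<nu>)))"
  proof -
    define c where "c = 4 * \<nu> / ((1 + \<nu>) * L powr (1 / \<nu>))"
    have c0: "0 < c" using nu L_pos by (simp add: c_def)
    have e: "4 * \<nu> * a / ((1 + \<nu>) * L powr (1 / \<nu>)) = c * a" for a by (simp add: c_def)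
    have h: "2 * \<nu> / ((1 + \<nu>) * L powr (1 / \<nu>)) = c / 2" by (simp add: c_def)
    have q: "c * a - a\<^sup>2 \<le> c * (c / 2) - (c / 2)\<^sup>2" for a
    proof -
      have "0 \<le> (a - c / 2)\<^sup>2" by simp
      then show ?thesis by (simp add: power2_eq_square algebra_simps)
    qed
    show ?thesis unfolding is_arg_max_def e h c_def[symmetric]
    proof (intro conjI notI)
      show "c / 2 \<in> {0<..c}" using c0 by simp
    next
      assume "\<exists>y. y \<in> {0<..c} \<and> c * (c / 2) - (c / 2)\<^sup>2 < c * y - y\<^sup>2"
      then obtain y where "c * (c / 2) - (c / 2)\<^sup>2 < c * y - y\<^sup>2" by blast
      then show False using q[of y] by linarith
    qed
  qed
  have A: "\<forall>k. f (x (Suc k)) \<le> f (x k)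
                 - (\<alpha> k - L / (1 + \<nu>) * \<alpha> k powr (1 + \<nu>)) * norm (g (x k)) powr ((1 + \<nu>) / \<nu>)"
    using inLS stepA by blast
  have A2: "\<forall>k. f (x (Suc k)) \<le> f (x k)" using inLS mono1 by blast
  show ?thesis
    apply (intro conjI)
    apply (rule inLS)
    apply (rule A)
    apply (rule A2)
    apply (rule impI, erule B)
    apply (rule C1)
    apply (rule C2)
    done
qed
end
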